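(* Let $(k,s)\in\mathcal A$. Then there exist $\theta>0$ and constants independent of $\delta^u,\delta^v\in(0,\delta_0]$ such that: (a) for every $\epsilon<\min\{3-k+s,\ s+5/2\}$, $$\|\mathcal B^u[u_1,v_2]\|_{L^\infty_tH^{k+\epsilon}_x}\lesssim(\delta^u)^{\theta}\|u_1\|_{L^\infty_tH^k_x}\|v_2\|_{L^\infty_tH^s_x};$$ (b) for every $\epsilon<\min\{2-s+k,\ 4k-s\}$, $$\|\mathcal B^v[u_1,u_2]\|_{L^\infty_tH^{s+\epsilon}_x}\lesssim(\delta^v)^{\theta}\|u_1\|_{L^\infty_tH^k_x}\|u_2\|_{L^\infty_tH^k_x}.$$ (Here $\theta$ and the implicit constants may depend on $k,s,\epsilon$.)
   Context: $\mathcal{A}=\{(k,s)\in\mathbb R^2: k\ge 0,\ s>-3/4,\ s<4k,\ -2<k-s<3\}$. $\mathcal F_xf(\xi)=\int e^{-ix\xi}f(x)dx$. $\delta_0>0$ is a fixed small absolute constant and $\delta^u,\delta^v\in(0,\delta_0]$. $U_\xi=\{\xi_1:100|\xi_1|<|\xi|,\ |\xi|>1/\delta^u\}$, $V_\xi=\{\xi_1:1/\delta^v<|\xi_1|<100|\xi|\}$; $\Phi_1^u(\xi,\xi_1,\xi_2)=\xi^2-\xi_1^2+\xi_2^3$, $\Phi_1^v(\xi,\xi_1,\xi_2)=-\xi^3-\xi_1^2+\xi_2^2$. The boundary operators, acting pointwise in time, are $\mathcal F_x(\mathcal B^u[f,g])(\xi)=\frac1{2\pi}\int_{\xi_1\in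 U_\xi}\frac{\mathcal F_xf(\xi_1)\mathcal F_xg(\xi-\xi_1)}{i\Phi_1^u(\xi,\xi_1,\xi-\xi_1)}d\xi_1$, $\mathcal F_x(\mathcal B^v[f,g])(\xi)=\frac{i\xi}{2\pi}\int_{\xi_1\in V_\xi}\frac{\mathcal F_xf(\xi_1)\overline{\mathcal F_xg(\xi_1-\xi)}}{i\Phi_1^v(\xi,\xi_1,\xi-\xi_1)}d\xi_1$. *)

theory Defs
  imports "HOL-Analysis.Analysis"
begin

text \<open>All functions of x are represented through their spatial Fourier transforms
  (F_x f)(xi) = int e^{-i x xi} f(x) dx; by Plancherel this is a bijection between H^s
  and the weighted L^2 space below.  A time-dependent function is a map
  t \<mapsto> (xi \<mapsto> F_x u(t)(xi)).\<close>

definition admissible :: "(real \<times> real) set" where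
  "admissible = {(k, s). k \<ge> 0 \<and> s > -3/4 \<and> s < 4 * k \<and> -2 < k - s \<and> k - s < 3}"

definition sob_sq :: "real \<Rightarrow> (real \<Rightarrow> complex) \<Rightarrow> ennreal" where
  "sob_sq s F = (\<integral>\<^sup>+ \<xi>. ennreal ((1 + \<xi>\<^sup>2) powr s * (cmod (F \<xi>))\<^sup>2) \<partial>lborel)"

definition U_set :: "real \<Rightarrow> real \<Rightarrow> real set" where
  "U_set \<delta> \<xi> = {\<xi>1. 100 * \<bar>\<xi>1\<bar> < \<bar>\<xi>\<bar> \<and> \<bar>\<xi>\<bar> > 1 / \<delta>}"

definition V_set :: "real \<Rightarrow> real \<Rightarrow> real set" where
  "V_set \<delta> \<xi> = {\<xi>1. 1 / \<delta> < \<bar>\<xi>1\<bar> \<and> \<bar>\<xi>1\<bar> < 100 * \<bar>\<xi>\<bar>}"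

definition Phi_u :: "real \<Rightarrow> real \<Rightarrow> real \<Rightarrow> real" where
  "Phi_u \<xi> \<xi>1 \<xi>2 = \<xi>\<^sup>2 - \<xi>1\<^sup>2 + \<xi>2 ^ 3"

definition Phi_v :: "real \<Rightarrow> real \<Rightarrow> real \<Rightarrow> real" where
  "Phi_v \<xi> \<xi>1 \<xi>2 = - (\<xi> ^ 3) - \<xi>1\<^sup>2 + \<xi>2\<^sup>2"

definition Bu_hat :: "real \<Rightarrow> (real \<Rightarrow> complex) \<Rightarrow> (real \<Rightarrow> complex) \<Rightarrow> real \<Rightarrow> complex" where
  "Bu_hat \<delta> Ff Fg \<xi> = (1 / (2 * complex_of_real pi)) *
     (LINT \<xi>1 : U_set \<delta> \<xi> | lborel.
        Ff \<xi>1 * Fg (\<xi> - \<xi>1) / (\<i> * complex_of_real (Phi_u \<xi> \<xi>1 (\<xi> - \<xi>1))))"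

definition Bv_hat :: "real \<Rightarrow> (real \<Rightarrow> complex) \<Rightarrow> (real \<Rightarrow> complex) \<Rightarrow> real \<Rightarrow> complex" where
  "Bv_hat \<delta> Ff Fg \<xi> = (\<i> * complex_of_real \<xi> / (2 * complex_of_real pi)) *
     (LINT \<xi>1 : V_set \<delta> \<xi> | lborel.
        Ff \<xi>1 * cnj (Fg (\<xi>1 - \<xi>)) / (\<i> * complex_of_real (Phi_v \<xi> \<xi>1 (\<xi> - \<xi>1))))"

end

theory Submission
  imports Defs
begin



lemma powr_ext_int:
  assumes "b > (1::real)"
  shows "(\<integral>\<^sup>+x. indicator {1..} x * ennreal (x powr (-b)) \<partial>lborel) = ennreal (1/(b-1))"
proof -
  have "((\<lambda>x. x powr (-b)) has_integral -(1 powr (-b+1)) / (-b+1)) {1..}"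
    by (rule has_integral_powr_to_inf) (use assms in auto)
  moreover have "-(1 powr (-b+1)) / (-b+1) = 1/(b-1)"
    using assms by (simp add: divide_simps)
  ultimately have "((\<lambda>x. x powr (-b)) has_integral 1/(b-1)) {1..}"
    by simp
  from nn_integral_has_integral_lebesgue[OF _ this]
  have "integral\<^sup>N lborel (\<lambda>x. indicator {1..} x * x powr (-b)) = ennreal (1/(b-1))" by simp
  then show ?thesis
    by (simp add: ennreal_mult' ennreal_indicator mult.commute)
qed

lemma w_int_finite:
  assumes "\<beta> > 1/2"
  shows "(\<integral>\<^sup>+x. ennreal ((1 + x\<^sup>2) powr (-\<beta>)) \<partial>lborel) < \<infinity>"
proof -
  define h where "h x = ennreal ((1 + x\<^sup>2) powr (-\<beta>))" for x :: real
  have hm[measurable]: "h \<in> borel_measurable borel" unfolding h_def by measurable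
  have hev: "h (-x) = h x" for x unfolding h_def by simp
  have "(\<integral>\<^sup>+x. h x \<partial>lborel) \<le> (\<integral>\<^sup>+x. indicator {0..} x * h x + indicator {..0} x * h x \<partial>lborel)"
    by (intro nn_integral_mono) (auto simp: indicator_def)
  also have "\<dots> = (\<integral>\<^sup>+x. indicator {0..} x * h x \<partial>lborel) + (\<integral>\<^sup>+x. indicator {..0} x * h x \<partial>lborel)"
    by (intro nn_integral_add) auto
  also have "(\<integral>\<^sup>+x. indicator {..0} x * h x \<partial>lborel) = (\<integral>\<^sup>+x. indicator {0..} x * h x \<partial>lborel)"
    by (subst nn_integral_real_affine[where c="-1" and t=0]) (auto simp: hev indicator_def)
  also have "(\<integral>\<^sup>+x. indicator {0..} x * h x \<partial>lborel) \<le>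
      (\<integral>\<^sup>+x. indicator {0..<1} x + indicator {1..} x * ennreal (x powr (-(2*\<beta>))) \<partial>lborel)"
  proof (intro nn_integral_mono)
    fix x :: real
    show "indicator {0..} x * h x \<le> indicator {0..<1} x + indicator {1..} x * ennreal (x powr (-(2*\<beta>)))"
    proof (cases "x \<ge> 1")
      case True
      have "(1 + x\<^sup>2) powr (-\<beta>) \<le> (x\<^sup>2) powr (-\<beta>)"
        using True assms by (intro powr_mono2') auto
      also have "(x\<^sup>2) powr (-\<beta>) = x powr (-(2*\<beta>))"
      proof -
        have "x\<^sup>2 = x powr 2" using True by (simp add: powr_numeral)
        then show ?thesis by (simp add: powr_powr)
      qed
      finally show ?thesis using True by (simp add: h_def indicator_def)
    next
      case False
      have "(1 + x\<^sup>2) powr (-\<beta>) \<le> 1"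
        using powr_mono[of "-\<beta>" 0 "1+x\<^sup>2"] assms by (simp add: add_pos_nonneg split: if_splits)
      then show ?thesis using False by (auto simp: h_def indicator_def)
    qed
  qed
  also have "\<dots> = 1 + ennreal (1/(2*\<beta>-1))"
  proof -
    have a: "(\<integral>\<^sup>+x. indicator {0..<1::real} x \<partial>lborel) = (1::ennreal)" by simp
    have b: "(\<integral>\<^sup>+x. indicator {1..} x * ennreal (x powr (-(2*\<beta>))) \<partial>lborel) = ennreal (1/(2*\<beta>-1))"
      using powr_ext_int[of "2*\<beta>"] assms by simp
    show ?thesis by (subst nn_integral_add) (auto simp only: a b, measurable)
  qed
  finally have "(\<integral>\<^sup>+x. h x \<partial>lborel) \<le> (1 + ennreal (1/(2*\<beta>-1))) + (1 + ennreal (1/(2*\<beta>-1)))"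
    by (simp add: add_mono)
  also have "\<dots> < \<infinity>" by (simp add: less_top[symmetric])
  finally show ?thesis unfolding h_def .
qed



lemma set_int_norm_bound:
  fixes h :: "real \<Rightarrow> complex"
  shows "ennreal (norm (set_lebesgue_integral M S h)) \<le> (\<integral>\<^sup>+x. indicator S x * ennreal (norm (h x)) \<partial>M)"
proof (cases "integrable M (\<lambda>x. indicator S x *\<^sub>R h x)")
  case True
  have "ennreal (norm (set_lebesgue_integral M S h)) \<le> (\<integral>\<^sup>+x. norm (indicator S x *\<^sub>R h x) \<partial>M)"
    unfolding set_lebesgue_integral_def by (rule integral_norm_bound_ennreal[OF True])
  also have "\<dots> = (\<integral>\<^sup>+x. indicator S x * ennreal (norm (h x)) \<partial>M)"
    by (intro nn_integral_cong) (auto simp: indicator_def)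
  finally show ?thesis .
next
  case False
  then show ?thesis unfolding set_lebesgue_integral_def
    by (simp add: not_integrable_integral_eq)
qed

lemma tonelli_conv_minus:
  fixes F G :: "real \<Rightarrow> ennreal"
  assumes [measurable]: "F \<in> borel_measurable borel" "G \<in> borel_measurable borel"
  shows "(\<integral>\<^sup>+\<xi>. (\<integral>\<^sup>+\<xi>1. F \<xi>1 * G (\<xi> - \<xi>1) \<partial>lborel) \<partial>lborel) = (\<integral>\<^sup>+x. F x \<partial>lborel) * (\<integral>\<^sup>+x. G x \<partial>lborel)"
proof -
  have "(\<integral>\<^sup>+\<xi>. (\<integral>\<^sup>+\<xi>1. F \<xi>1 * G (\<xi> - \<xi>1) \<partial>lborel) \<partial>lborel) =
        (\<integral>\<^sup>+\<xi>1. (\<integral>\<^sup>+\<xi>. F \<xi>1 * G (\<xi> - \<xi>1) \<partial>lborel) \<partial>lborel)"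
    by (rule lborel_pair.Fubini') measurable
  also have "\<dots> = (\<integral>\<^sup>+\<xi>1. F \<xi>1 * (\<integral>\<^sup>+x. G x \<partial>lborel) \<partial>lborel)"
  proof (intro nn_integral_cong)
    fix \<xi>1 :: real
    have "(\<integral>\<^sup>+x. G x \<partial>lborel) = (\<integral>\<^sup>+x. G (-\<xi>1 + 1 * x) \<partial>lborel)"
      using nn_integral_real_affine[of G 1 "-\<xi>1"] by simp
    then have "(\<integral>\<^sup>+x. G x \<partial>lborel) = (\<integral>\<^sup>+\<xi>. G (\<xi> - \<xi>1) \<partial>lborel)" by simp
    then show "(\<integral>\<^sup>+\<xi>. F \<xi>1 * G (\<xi> - \<xi>1) \<partial>lborel) = F \<xi>1 * (\<integral>\<^sup>+x. G x \<partial>lborel)"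
      by (simp add: nn_integral_cmult)
  qed
  also have "\<dots> = (\<integral>\<^sup>+x. F x \<partial>lborel) * (\<integral>\<^sup>+x. G x \<partial>lborel)"
    by (simp add: nn_integral_multc)
  finally show ?thesis .
qed

lemma tonelli_conv_minus2:
  fixes F G :: "real \<Rightarrow> ennreal"
  assumes [measurable]: "F \<in> borel_measurable borel" "G \<in> borel_measurable borel"
  shows "(\<integral>\<^sup>+\<xi>. (\<integral>\<^sup>+\<xi>1. F \<xi>1 * G (\<xi>1 - \<xi>) \<partial>lborel) \<partial>lborel) = (\<integral>\<^sup>+x. F x \<partial>lborel) * (\<integral>\<^sup>+x. G x \<partial>lborel)"
proof -
  have "(\<integral>\<^sup>+\<xi>. (\<integral>\<^sup>+\<xi>1. F \<xi>1 * G (\<xi>1 - \<xi>) \<partial>lborel) \<partial>lborel) =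
        (\<integral>\<^sup>+\<xi>1. (\<integral>\<^sup>+\<xi>. F \<xi>1 * G (\<xi>1 - \<xi>) \<partial>lborel) \<partial>lborel)"
    by (rule lborel_pair.Fubini') measurable
  also have "\<dots> = (\<integral>\<^sup>+\<xi>1. F \<xi>1 * (\<integral>\<^sup>+x. G x \<partial>lborel) \<partial>lborel)"
  proof (intro nn_integral_cong)
    fix \<xi>1 :: real
    have "(\<integral>\<^sup>+x. G x \<partial>lborel) = (\<integral>\<^sup>+x. G (\<xi>1 + (-1) * x) \<partial>lborel)"
      using nn_integral_real_affine[of G "-1" "\<xi>1"] by simp
    then have "(\<integral>\<^sup>+x. G x \<partial>lborel) = (\<integral>\<^sup>+\<xi>. G (\<xi>1 - \<xi>) \<partial>lborel)" by simp
    then show "(\<integral>\<^sup>+\<xi>. F \<xi>1 * G (\<xi>1 - \<xi>) \<partial>lborel) = F \<xi>1 * (\<integral>\<^sup>+x. G x \<partial>lborel)"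
      by (simp add: nn_integral_cmult)
  qed
  also have "\<dots> = (\<integral>\<^sup>+x. F x \<partial>lborel) * (\<integral>\<^sup>+x. G x \<partial>lborel)"
    by (simp add: nn_integral_multc)
  finally show ?thesis .
qed

lemma w_pow_bound:
  fixes k \<beta> W :: real
  assumes "k \<ge> 0" "\<beta> > 1/2" "\<And>x. x \<in> S \<Longrightarrow> 1 + x\<^sup>2 \<le> W" "S \<in> sets borel"
  shows "(\<integral>\<^sup>+x. indicator S x * ennreal ((1 + x\<^sup>2) powr (-k)) \<partial>lborel)
     \<le> (\<integral>\<^sup>+x. ennreal ((1 + x\<^sup>2) powr (-\<beta>)) \<partial>lborel) * ennreal (W powr (max (\<beta> - k) 0))"
proof -
  have "(\<integral>\<^sup>+x. indicator S x * ennreal ((1 + x\<^sup>2) powr (-k)) \<partial>lborel)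
     \<le> (\<integral>\<^sup>+x. ennreal ((1 + x\<^sup>2) powr (-\<beta>)) * ennreal (W powr (max (\<beta> - k) 0)) \<partial>lborel)"
  proof (intro nn_integral_mono)
    fix x :: real
    show "indicator S x * ennreal ((1 + x\<^sup>2) powr (-k)) \<le> ennreal ((1 + x\<^sup>2) powr (-\<beta>)) * ennreal (W powr (max (\<beta> - k) 0))"
    proof (cases "x \<in> S")
      case False then show ?thesis by simp
    next
      case True
      have w1: "1 \<le> 1 + x\<^sup>2" by simp
      have wW: "1 + x\<^sup>2 \<le> W" using assms(3) True by blast
      have "(1 + x\<^sup>2) powr (-k) \<le> (1 + x\<^sup>2) powr (-\<beta>) * W powr (max (\<beta> - k) 0)"
      proof (cases "k \<ge> \<beta>")
        case True
        have "(1 + x\<^sup>2) powr (-k) \<le> (1 + x\<^sup>2) powr (-\<beta>)"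
          using True w1 by (intro powr_mono) auto
        moreover have "W \<noteq> 0" using wW w1 by linarith
        moreover have "max (\<beta> - k) 0 = 0" using True by simp
        ultimately have "W powr (max (\<beta> - k) 0) = 1" by simp
        with \<open>(1 + x\<^sup>2) powr (-k) \<le> (1 + x\<^sup>2) powr (-\<beta>)\<close> show ?thesis by simp
      next
        case False
        have "(1 + x\<^sup>2) powr (-k) = (1 + x\<^sup>2) powr (-\<beta>) * (1 + x\<^sup>2) powr (\<beta> - k)"
          by (simp add: powr_add[symmetric])
        also have "(1 + x\<^sup>2) powr (\<beta> - k) \<le> W powr (\<beta> - k)"
          using False wW by (intro powr_mono2) auto
        finally show ?thesis using False by (simp add: mult_left_mono)
      qed
      then show ?thesis using True by (simp add: ennreal_mult[symmetric])
    qed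
  qed
  also have "\<dots> = (\<integral>\<^sup>+x. ennreal ((1 + x\<^sup>2) powr (-\<beta>)) \<partial>lborel) * ennreal (W powr (max (\<beta> - k) 0))"
    by (simp add: nn_integral_multc)
  finally show ?thesis .
qed



lemma Phi_u_bound:
  fixes \<xi> \<xi>1 :: real
  assumes "\<bar>\<xi>\<bar> > 10^7" "100 * \<bar>\<xi>1\<bar> < \<bar>\<xi>\<bar>"
  shows "\<bar>Phi_u \<xi> \<xi>1 (\<xi> - \<xi>1)\<bar> \<ge> \<bar>\<xi>\<bar>^3 / 2"
proof -
  define a where "a = \<bar>\<xi>\<bar>"
  define b where "b = \<bar>\<xi> - \<xi>1\<bar>"
  have a0: "a > 10^7" using assms a_def by simp
  have b1: "b \<ge> 99/100 * a" using assms unfolding a_def b_def by linarith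
  have b3: "b^3 \<ge> (99/100 * a)^3" using b1 a0 by (intro power_mono) auto
  have sq: "\<xi>1\<^sup>2 \<le> \<xi>\<^sup>2"
    using assms by (simp add: abs_le_square_iff[symmetric])
  have a2: "\<xi>\<^sup>2 = a^2" unfolding a_def by simp
  have a3: "a^3 \<ge> 10000000 * a^2"
  proof -
    have "a^3 = a * a^2" by (simp add: power3_eq_cube power2_eq_square)
    also have "\<dots> \<ge> 10000000 * a^2" using a0 by (intro mult_right_mono) auto
    finally show ?thesis .
  qed
  have "\<bar>(\<xi> - \<xi>1)^3\<bar> = b^3" unfolding b_def by (simp add: power_abs)
  then have "\<bar>Phi_u \<xi> \<xi>1 (\<xi> - \<xi>1)\<bar> \<ge> b^3 - \<xi>\<^sup>2"
    unfolding Phi_u_def using sq by (smt (verit) zero_le_power2)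
  moreover have "(99/100 * a)^3 = (99/100)^3 * a^3" by (rule power_mult_distrib)
  moreover have "(99/100::real)^3 = 970299/1000000" by (simp add: power3_eq_cube)
  moreover have "a^3 \<ge> 0" using a0 by simp
  ultimately have "b^3 \<ge> 970299/1000000 * a^3" "b^3 - a^2 \<le> \<bar>Phi_u \<xi> \<xi>1 (\<xi> - \<xi>1)\<bar>" "a^3 \<ge> 0"
    using b3 a2 by auto
  then show ?thesis using a3 unfolding a_def[symmetric] by linarith
qed

lemma Phi_v_bound:
  fixes \<xi> \<xi>1 :: real
  assumes "\<bar>\<xi>\<bar> > 10^5" "\<bar>\<xi>1\<bar> < 100 * \<bar>\<xi>\<bar>"
  shows "\<bar>Phi_v \<xi> \<xi>1 (\<xi> - \<xi>1)\<bar> \<ge> \<bar>\<xi>\<bar>^3 / 2"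
proof -
  define a where "a = \<bar>\<xi>\<bar>"
  have a0: "a > 10^5" using assms a_def by simp
  have s1: "\<xi>1\<^sup>2 \<le> (100*a)^2"
  proof -
    have "\<bar>\<xi>1\<bar>^2 \<le> (100*a)^2" using assms unfolding a_def by (intro power_mono) auto
    then show ?thesis by simp
  qed
  have s2: "(\<xi> - \<xi>1)\<^sup>2 \<le> (101*a)^2"
  proof -
    have "\<bar>\<xi> - \<xi>1\<bar> \<le> 101 * a" using assms unfolding a_def by linarith
    then have "\<bar>\<xi> - \<xi>1\<bar>^2 \<le> (101*a)^2" by (intro power_mono) auto
    then show ?thesis by simp
  qed
  have a3: "a^3 \<ge> 100000 * a^2"
  proof -
    have "a^3 = a * a^2" by (simp add: power3_eq_cube power2_eq_square)
    also have "\<dots> \<ge> 100000 * a^2" using a0 by (intro mult_right_mono) auto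
    finally show ?thesis .
  qed
  have "\<bar>\<xi>^3\<bar> = a^3" unfolding a_def by (simp add: power_abs)
  then have "\<bar>Phi_v \<xi> \<xi>1 (\<xi> - \<xi>1)\<bar> \<ge> a^3 - \<xi>1\<^sup>2 - (\<xi> - \<xi>1)\<^sup>2"
    unfolding Phi_v_def by (smt (verit) zero_le_power2)
  then show ?thesis using s1 s2 a3 a0 unfolding a_def[symmetric]
    by (simp add: power_mult_distrib)
qed

lemma w_ratio_powr:
  fixes a b s :: real
  assumes "1 \<le> a" "1 \<le> b" "a \<le> 2 * b" "b \<le> 2 * a"
  shows "a powr (-s) \<le> 2 powr \<bar>s\<bar> * b powr (-s)"
proof -
  have "a powr (-s) = (a / b) powr (-s) * b powr (-s)"
    using assms by (simp add: powr_divide)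
  moreover have "(a / b) powr (-s) \<le> 2 powr \<bar>s\<bar>"
  proof (cases "s \<le> 0")
    case True
    have "(a / b) powr (-s) \<le> 2 powr (-s)"
      using assms True by (intro powr_mono2) (auto simp: divide_simps)
    then show ?thesis using True by simp
  next
    case False
    have "(a / b) powr (-s) = (b / a) powr s"
      using assms by (simp add: powr_minus powr_divide divide_simps)
    also have "\<dots> \<le> 2 powr s"
      using assms False by (intro powr_mono2) (auto simp: divide_simps)
    finally show ?thesis using False by simp
  qed
  ultimately show ?thesis by (simp add: mult_right_mono)
qed


lemma w_nz[simp]: "1 + x\<^sup>2 \<noteq> (0::real)"
  using zero_le_power2[of x] by linarith

lemma w_pos[simp]: "0 < 1 + x\<^sup>2" for x :: real
  using zero_le_power2[of x] by linarith

lemma half_bound: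
  fixes c \<xi> k :: real
  assumes "k \<ge> 0" "\<bar>c\<bar> \<ge> \<bar>\<xi>\<bar> / 2"
  shows "(1 + c\<^sup>2) powr (-k) \<le> 4 powr k * (1 + \<xi>\<^sup>2) powr (-k)"
proof -
  have "(\<bar>\<xi>\<bar>/2)^2 \<le> \<bar>c\<bar>^2" using assms by (intro power_mono) auto
  then have "\<xi>\<^sup>2 / 4 \<le> c\<^sup>2" by (simp add: power_divide)
  then have h: "(1 + \<xi>\<^sup>2) / 4 \<le> 1 + c\<^sup>2" by simp
  have "(1 + c\<^sup>2) powr (-k) \<le> ((1 + \<xi>\<^sup>2) / 4) powr (-k)"
    using assms h by (intro powr_mono2') (auto intro: add_pos_nonneg)
  also have "\<dots> = 4 powr k * (1 + \<xi>\<^sup>2) powr (-k)"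
    by (simp add: powr_divide powr_minus divide_simps add_pos_nonneg)
  finally show ?thesis .
qed

lemma prod_split:
  fixes a b \<xi> k :: real
  assumes "k \<ge> 0" "\<xi> = a - b"
  shows "(1 + a\<^sup>2) powr (-k) * (1 + b\<^sup>2) powr (-k)
     \<le> 4 powr k * (1 + \<xi>\<^sup>2) powr (-k) * ((1 + a\<^sup>2) powr (-k) + (1 + b\<^sup>2) powr (-k))"
proof -
  have "\<bar>a\<bar> \<ge> \<bar>\<xi>\<bar> / 2 \<or> \<bar>b\<bar> \<ge> \<bar>\<xi>\<bar> / 2" using assms(2) by linarith
  then show ?thesis
  proof
    assume "\<bar>a\<bar> \<ge> \<bar>\<xi>\<bar> / 2"
    from half_bound[OF assms(1) this]
    have "(1 + a\<^sup>2) powr (-k) * (1 + b\<^sup>2) powr (-k) \<le> 4 powr k * (1 + \<xi>\<^sup>2) powr (-k) * (1 + b\<^sup>2) powr (-k)"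
      by (intro mult_right_mono) auto
    also have "\<dots> \<le> 4 powr k * (1 + \<xi>\<^sup>2) powr (-k) * ((1 + a\<^sup>2) powr (-k) + (1 + b\<^sup>2) powr (-k))"
      by (intro mult_left_mono) auto
    finally show ?thesis .
  next
    assume "\<bar>b\<bar> \<ge> \<bar>\<xi>\<bar> / 2"
    from half_bound[OF assms(1) this]
    have "(1 + a\<^sup>2) powr (-k) * (1 + b\<^sup>2) powr (-k) \<le> (1 + a\<^sup>2) powr (-k) * (4 powr k * (1 + \<xi>\<^sup>2) powr (-k))"
      by (intro mult_left_mono) auto
    also have "\<dots> = 4 powr k * (1 + \<xi>\<^sup>2) powr (-k) * (1 + a\<^sup>2) powr (-k)" by simp
    also have "\<dots> \<le> 4 powr k * (1 + \<xi>\<^sup>2) powr (-k) * ((1 + a\<^sup>2) powr (-k) + (1 + b\<^sup>2) powr (-k))"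
      by (intro mult_left_mono) auto
    finally show ?thesis .
  qed
qed



lemma pointwise_a:
  fixes f g :: "real \<Rightarrow> complex" and k s \<epsilon> \<beta> \<delta> \<xi> :: real
  assumes fm[measurable]: "f \<in> borel_measurable borel" and gm[measurable]: "g \<in> borel_measurable borel"
    and k: "k \<ge> 0" and \<beta>: "\<beta> > 1/2" and \<delta>: "0 < \<delta>" "\<delta> \<le> 1/10^7"
    and e: "max k \<beta> + \<epsilon> - s - 3 \<le> 0"
  shows "ennreal ((1 + \<xi>\<^sup>2) powr (k + \<epsilon>) * (cmod (Bu_hat \<delta> f g \<xi>))\<^sup>2)
     \<le> ennreal (8 * enn2real (\<integral>\<^sup>+x. ennreal ((1 + x\<^sup>2) powr (-\<beta>)) \<partial>lborel) * 2 powr \<bar>s\<bar> / pi\<^sup>2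
                 * \<delta> powr (-2 * (max k \<beta> + \<epsilon> - s - 3)))
       * (\<integral>\<^sup>+\<xi>1. ennreal ((1 + \<xi>1\<^sup>2) powr k * (cmod (f \<xi>1))\<^sup>2)
                   * ennreal ((1 + (\<xi> - \<xi>1)\<^sup>2) powr s * (cmod (g (\<xi> - \<xi>1)))\<^sup>2) \<partial>lborel)"
  (is "?L \<le> ennreal ?K * ?J")
proof (cases "\<bar>\<xi>\<bar> > 1 / \<delta>")
  case False
  then have "U_set \<delta> \<xi> = {}" unfolding U_set_def by auto
  then have "Bu_hat \<delta> f g \<xi> = 0" unfolding Bu_hat_def set_lebesgue_integral_def by simp
  then show ?thesis by simp
next
  case True
  define Cb where "Cb = (\<integral>\<^sup>+x. ennreal ((1 + x\<^sup>2) powr (-\<beta>)) \<partial>lborel)"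
  define cb where "cb = enn2real Cb"
  have Cb: "Cb = ennreal cb" "cb \<ge> 0"
    using w_int_finite[OF \<beta>] unfolding cb_def Cb_def by (auto simp: less_top ennreal_enn2real)
  define W where "W = 1 + \<xi>\<^sup>2"
  define m where "m = max (\<beta> - k) 0"
  define U where "U = U_set \<delta> \<xi>"
  have d7: "1 / \<delta> \<ge> 10^7" using \<delta> by (simp add: field_simps)
  have big: "\<bar>\<xi>\<bar> > 10^7" using True d7 by linarith
  have U_eq: "U = {x. 100 * \<bar>x\<bar> < \<bar>\<xi>\<bar>}" unfolding U_def U_set_def using True by auto
  have Um[measurable]: "U \<in> sets borel" unfolding U_eq by measurable
  define X where "X = (\<integral>\<^sup>+x. indicator U x * ennreal (cmod (f x) * cmod (g (\<xi> - x))) \<partial>lborel)"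
  define P1 where "P1 = 1 / (pi * \<bar>\<xi>\<bar>^3)"
  have xi3: "\<bar>\<xi>\<bar>^3 > 0" using big by simp
  have P1pos: "P1 \<ge> 0" unfolding P1_def by simp
  have s1: "ennreal (cmod (Bu_hat \<delta> f g \<xi>)) \<le> ennreal P1 * X"
  proof -
    define h where "h x = f x * g (\<xi> - x) / (\<i> * complex_of_real (Phi_u \<xi> x (\<xi> - x)))" for x
    have Bu: "Bu_hat \<delta> f g \<xi> = (1 / (2 * complex_of_real pi)) * set_lebesgue_integral lborel U h"
      unfolding Bu_hat_def U_def h_def by simp
    have nc: "cmod (1 / (2 * complex_of_real pi)) = 1 / (2 * pi)"
      by (simp add: norm_divide norm_mult)
    have "ennreal (norm (set_lebesgue_integral lborel U h)) \<le> (\<integral>\<^sup>+x. indicator U x * ennreal (norm (h x)) \<partial>lborel)"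
      by (rule set_int_norm_bound)
    also have "\<dots> \<le> (\<integral>\<^sup>+x. ennreal (2 / \<bar>\<xi>\<bar>^3) * (indicator U x * ennreal (cmod (f x) * cmod (g (\<xi> - x)))) \<partial>lborel)"
    proof (intro nn_integral_mono)
      fix x
      show "indicator U x * ennreal (norm (h x)) \<le> ennreal (2 / \<bar>\<xi>\<bar>^3) * (indicator U x * ennreal (cmod (f x) * cmod (g (\<xi> - x))))"
      proof (cases "x \<in> U")
        case False then show ?thesis by simp
      next
        case xU: True
        then have "100 * \<bar>x\<bar> < \<bar>\<xi>\<bar>" unfolding U_eq by simp
        from Phi_u_bound[OF big this] have Ph: "\<bar>Phi_u \<xi> x (\<xi> - x)\<bar> \<ge> \<bar>\<xi>\<bar>^3 / 2" .
        have Ph0: "\<bar>Phi_u \<xi> x (\<xi> - x)\<bar> > 0" using Ph xi3 by linarith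
        have "norm (h x) = cmod (f x) * cmod (g (\<xi> - x)) / \<bar>Phi_u \<xi> x (\<xi> - x)\<bar>"
          unfolding h_def by (simp add: norm_divide norm_mult)
        also have "\<dots> \<le> cmod (f x) * cmod (g (\<xi> - x)) / (\<bar>\<xi>\<bar>^3 / 2)"
          using Ph xi3 Ph0 by (intro divide_left_mono) (auto intro: mult_pos_pos)
        also have "\<dots> = 2 / \<bar>\<xi>\<bar>^3 * (cmod (f x) * cmod (g (\<xi> - x)))" by simp
        finally have "norm (h x) \<le> 2 / \<bar>\<xi>\<bar>^3 * (cmod (f x) * cmod (g (\<xi> - x)))" .
        then show ?thesis using xU by (simp add: ennreal_mult[symmetric] ennreal_leI)
      qed
    qed
    also have "\<dots> = ennreal (2 / \<bar>\<xi>\<bar>^3) * X"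
      unfolding X_def by (rule nn_integral_cmult) measurable
    finally have I: "ennreal (norm (set_lebesgue_integral lborel U h)) \<le> ennreal (2 / \<bar>\<xi>\<bar>^3) * X" .
    have "ennreal (cmod (Bu_hat \<delta> f g \<xi>)) = ennreal (1 / (2 * pi)) * ennreal (norm (set_lebesgue_integral lborel U h))"
    proof -
      have n2: "cmod (2 * complex_of_real pi) = 2 * pi" by (simp add: norm_mult)
      have "cmod (Bu_hat \<delta> f g \<xi>) = 1 / (2 * pi) * norm (set_lebesgue_integral lborel U h)"
        unfolding Bu by (simp add: norm_divide n2)
      then show ?thesis by (simp add: ennreal_mult[symmetric])
    qed
    also have "\<dots> \<le> ennreal (1 / (2 * pi)) * (ennreal (2 / \<bar>\<xi>\<bar>^3) * X)"
      by (intro mult_left_mono I) simp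
    also have "\<dots> = ennreal P1 * X"
      unfolding P1_def by (simp add: ennreal_mult[symmetric] mult.assoc[symmetric])
    finally show ?thesis .
  qed

  define A2 where "A2 = (\<integral>\<^sup>+x. indicator U x * ennreal ((1 + x\<^sup>2) powr (-k)) \<partial>lborel)"
  define B2 where "B2 = (\<integral>\<^sup>+x. indicator U x * ennreal ((1 + x\<^sup>2) powr k * (cmod (f x))\<^sup>2 * (cmod (g (\<xi> - x)))\<^sup>2) \<partial>lborel)"
  have s2: "X^2 \<le> A2 * B2"
  proof -
    define a where "a x = indicator U x * ennreal ((1 + x\<^sup>2) powr (-k/2))" for x :: real
    define b where "b x = indicator U x * ennreal ((1 + x\<^sup>2) powr (k/2) * (cmod (f x) * cmod (g (\<xi> - x))))" for x :: real
    have am[measurable]: "a \<in> borel_measurable lborel" unfolding a_def by measurable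
    have bm[measurable]: "b \<in> borel_measurable lborel" unfolding b_def by measurable
    have pw: "(1 + x\<^sup>2) powr (-k/2) * (1 + x\<^sup>2) powr (k/2) = 1" for x :: real
      by (simp add: powr_add[symmetric])
    have sqa: "((1 + x\<^sup>2) powr (-k/2))^2 = (1 + x\<^sup>2) powr (-k)" for x :: real
      by (simp add: power2_eq_square powr_add[symmetric])
    have sqb: "((1 + x\<^sup>2) powr (k/2))^2 = (1 + x\<^sup>2) powr k" for x :: real
      by (simp add: power2_eq_square powr_add[symmetric])
    have sqa': "(ennreal ((1 + x\<^sup>2) powr (-(k/2))))^2 = ennreal ((1 + x\<^sup>2) powr (-k))" for x :: real
    proof -
      have "(ennreal ((1 + x\<^sup>2) powr (-(k/2))))^2 = ennreal (((1 + x\<^sup>2) powr (-(k/2)))^2)"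
        by (simp add: ennreal_power)
      also have "((1 + x\<^sup>2) powr (-(k/2)))^2 = (1 + x\<^sup>2) powr (-k)"
        by (simp add: power2_eq_square powr_add[symmetric])
      finally show ?thesis .
    qed
    have sqb': "(ennreal ((1 + x\<^sup>2) powr (k/2) * (cmod (f x) * cmod (g (\<xi> - x)))))^2 =
        ennreal ((1 + x\<^sup>2) powr k * ((cmod (f x))\<^sup>2 * (cmod (g (\<xi> - x)))\<^sup>2))" for x :: real
    proof -
      have "(ennreal ((1 + x\<^sup>2) powr (k/2) * (cmod (f x) * cmod (g (\<xi> - x)))))^2
          = ennreal (((1 + x\<^sup>2) powr (k/2) * (cmod (f x) * cmod (g (\<xi> - x))))^2)"
        by (simp add: ennreal_power)
      also have "((1 + x\<^sup>2) powr (k/2) * (cmod (f x) * cmod (g (\<xi> - x))))^2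
          = (1 + x\<^sup>2) powr k * ((cmod (f x))\<^sup>2 * (cmod (g (\<xi> - x)))\<^sup>2)"
        by (simp only: power_mult_distrib sqb)
      finally show ?thesis .
    qed
    have "X = (\<integral>\<^sup>+x. a x * b x \<partial>lborel)"
      unfolding X_def
    proof (intro nn_integral_cong)
      fix x :: real
      have "(1 + x\<^sup>2) powr (-k/2) * ((1 + x\<^sup>2) powr (k/2) * (cmod (f x) * cmod (g (\<xi> - x))))
            = cmod (f x) * cmod (g (\<xi> - x))"
        using pw[of x] by (simp add: mult.assoc[symmetric])
      then show "indicator U x * ennreal (cmod (f x) * cmod (g (\<xi> - x))) = a x * b x"
        unfolding a_def b_def by (auto simp: indicator_def ennreal_mult[symmetric])
    qed
    moreover have "(\<integral>\<^sup>+x. a x ^ 2 \<partial>lborel) = A2"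
      unfolding A2_def a_def
      by (intro nn_integral_cong) (auto simp: indicator_def sqa')
    moreover have "(\<integral>\<^sup>+x. b x ^ 2 \<partial>lborel) = B2"
      unfolding B2_def b_def
      by (intro nn_integral_cong)
         (auto simp: indicator_def sqb' mult.assoc)
    ultimately show ?thesis using Cauchy_Schwarz_nn_integral[OF am bm] by simp
  qed
  have s3: "A2 \<le> ennreal cb * ennreal (W powr m)"
  proof -
    have "x \<in> U \<Longrightarrow> 1 + x\<^sup>2 \<le> W" for x
    proof -
      assume "x \<in> U"
      then have "\<bar>x\<bar> \<le> \<bar>\<xi>\<bar>" unfolding U_eq by simp
      then have "\<bar>x\<bar>^2 \<le> \<bar>\<xi>\<bar>^2" by (intro power_mono) auto
      then show ?thesis unfolding W_def by simp
    qed
    from w_pow_bound[OF k \<beta> this Um] show ?thesis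
      unfolding A2_def m_def Cb_def[symmetric] Cb(1) .
  qed
  have s4: "B2 \<le> ennreal (2 powr \<bar>s\<bar> * W powr (-s)) * ?J"
  proof -
    have "B2 \<le> (\<integral>\<^sup>+x. ennreal (2 powr \<bar>s\<bar> * W powr (-s)) *
            (ennreal ((1 + x\<^sup>2) powr k * (cmod (f x))\<^sup>2)
                   * ennreal ((1 + (\<xi> - x)\<^sup>2) powr s * (cmod (g (\<xi> - x)))\<^sup>2)) \<partial>lborel)"
      unfolding B2_def
    proof (intro nn_integral_mono)
      fix x :: real
      show "indicator U x * ennreal ((1 + x\<^sup>2) powr k * (cmod (f x))\<^sup>2 * (cmod (g (\<xi> - x)))\<^sup>2)
         \<le> ennreal (2 powr \<bar>s\<bar> * W powr (-s)) *
            (ennreal ((1 + x\<^sup>2) powr k * (cmod (f x))\<^sup>2)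
                   * ennreal ((1 + (\<xi> - x)\<^sup>2) powr s * (cmod (g (\<xi> - x)))\<^sup>2))"
      proof (cases "x \<in> U")
        case False then show ?thesis by simp
      next
        case xU: True
        define \<eta> where "\<eta> = \<xi> - x"
        have hx: "100 * \<bar>x\<bar> < \<bar>\<xi>\<bar>" using xU unfolding U_eq by simp
        have e1: "\<bar>\<eta>\<bar> \<le> 101/100 * \<bar>\<xi>\<bar>" "99/100 * \<bar>\<xi>\<bar> \<le> \<bar>\<eta>\<bar>" unfolding \<eta>_def using hx by linarith+
        have "\<bar>\<eta>\<bar>^2 \<le> (101/100 * \<bar>\<xi>\<bar>)^2" using e1 by (intro power_mono) auto
        moreover have "(101/100 * \<bar>\<xi>\<bar>)^2 = 10201/10000 * \<xi>\<^sup>2"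
          by (simp only: power_mult_distrib power2_abs) (simp add: power2_eq_square)
        ultimately have e2: "\<eta>\<^sup>2 \<le> 10201/10000 * \<xi>\<^sup>2" by simp
        have "(99/100 * \<bar>\<xi>\<bar>)^2 \<le> \<bar>\<eta>\<bar>^2" using e1 by (intro power_mono) auto
        moreover have "(99/100 * \<bar>\<xi>\<bar>)^2 = 9801/10000 * \<xi>\<^sup>2"
          by (simp only: power_mult_distrib power2_abs) (simp add: power2_eq_square)
        ultimately have e3: "9801/10000 * \<xi>\<^sup>2 \<le> \<eta>\<^sup>2" by simp
        have wr: "(1 + \<eta>\<^sup>2) powr (-s) \<le> 2 powr \<bar>s\<bar> * W powr (-s)"
          by (rule w_ratio_powr) (use e2 e3 in \<open>auto simp: W_def\<close>)
        have p1: "(1 + \<eta>\<^sup>2) powr (-s) * (1 + \<eta>\<^sup>2) powr s = 1"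
          by (simp add: powr_add[symmetric])
        have "(1 + x\<^sup>2) powr k * (cmod (f x))\<^sup>2 * (cmod (g \<eta>))\<^sup>2
            = ((1 + x\<^sup>2) powr k * (cmod (f x))\<^sup>2) * ((1 + \<eta>\<^sup>2) powr (-s) * ((1 + \<eta>\<^sup>2) powr s * (cmod (g \<eta>))\<^sup>2))"
          using p1 by (simp add: mult.assoc[symmetric])
        also have "\<dots> \<le> ((1 + x\<^sup>2) powr k * (cmod (f x))\<^sup>2) * ((2 powr \<bar>s\<bar> * W powr (-s)) * ((1 + \<eta>\<^sup>2) powr s * (cmod (g \<eta>))\<^sup>2))"
          by (intro mult_left_mono mult_right_mono wr) auto
        also have "\<dots> = (2 powr \<bar>s\<bar> * W powr (-s)) * (((1 + x\<^sup>2) powr k * (cmod (f x))\<^sup>2) * ((1 + \<eta>\<^sup>2) powr s * (cmod (g \<eta>))\<^sup>2))"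
          by (simp add: ac_simps)
        finally have "(1 + x\<^sup>2) powr k * (cmod (f x))\<^sup>2 * (cmod (g \<eta>))\<^sup>2
            \<le> (2 powr \<bar>s\<bar> * W powr (-s)) * (((1 + x\<^sup>2) powr k * (cmod (f x))\<^sup>2) * ((1 + \<eta>\<^sup>2) powr s * (cmod (g \<eta>))\<^sup>2))" .
        then show ?thesis using xU unfolding \<eta>_def[symmetric]
          by (simp add: ennreal_mult[symmetric] ennreal_leI)
      qed
    qed
    also have "\<dots> = ennreal (2 powr \<bar>s\<bar> * W powr (-s)) * ?J"
      by (rule nn_integral_cmult) measurable
    finally show ?thesis .
  qed
  define R where "R = W powr (k + \<epsilon>) * P1\<^sup>2 * cb * W powr m * (2 powr \<bar>s\<bar> * W powr (-s))"
  have L: "?L = ennreal (W powr (k + \<epsilon>)) * (ennreal (cmod (Bu_hat \<delta> f g \<xi>)))^2"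
    unfolding W_def by (simp add: ennreal_mult ennreal_power)
  have "(ennreal (cmod (Bu_hat \<delta> f g \<xi>)))^2 \<le> (ennreal P1 * X)^2"
    using s1 by (intro power_mono) auto
  also have "\<dots> = ennreal (P1\<^sup>2) * X^2"
    using P1pos by (simp add: power_mult_distrib ennreal_power)
  also have "\<dots> \<le> ennreal (P1\<^sup>2) * ((ennreal cb * ennreal (W powr m)) * (ennreal (2 powr \<bar>s\<bar> * W powr (-s)) * ?J))"
    using s2 s3 s4 by (intro mult_left_mono order.trans[OF s2] mult_mono) auto
  finally have "?L \<le> ennreal (W powr (k + \<epsilon>)) * (ennreal (P1\<^sup>2) * ((ennreal cb * ennreal (W powr m)) * (ennreal (2 powr \<bar>s\<bar> * W powr (-s)) * ?J)))"
    unfolding L by (intro mult_left_mono) auto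
  also have "\<dots> = ennreal R * ?J"
    unfolding R_def using Cb(2) by (simp add: ennreal_mult' mult.assoc)
  also have "\<dots> \<le> ennreal ?K * ?J"
  proof (intro mult_right_mono ennreal_leI)
    define e where "e = max k \<beta> + \<epsilon> - s - 3"
    have W1: "W \<ge> 1" unfolding W_def by simp
    have xi1: "\<xi>\<^sup>2 \<ge> 1"
    proof -
      have "1 \<le> \<bar>\<xi>\<bar>" using big by simp
      then have "1^2 \<le> \<bar>\<xi>\<bar>^2" by (intro power_mono) auto
      then show ?thesis by simp
    qed
    have P1sq: "P1\<^sup>2 \<le> 8 / pi\<^sup>2 * W powr (-3)"
    proof -
      have "W \<le> 2 * \<xi>\<^sup>2" unfolding W_def using xi1 by simp
      then have "W^3 \<le> (2 * \<xi>\<^sup>2)^3" using W1 by (intro power_mono) auto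
      then have W3: "W^3 \<le> 8 * \<bar>\<xi>\<bar>^6" by (simp add: power_mult_distrib power_even_abs flip: power_mult)
      have p6: "(\<bar>\<xi>\<bar>^3)^2 = \<bar>\<xi>\<bar>^6" by (simp only: power_mult[symmetric]) simp
      have "P1\<^sup>2 = 1 / (pi\<^sup>2 * (\<bar>\<xi>\<bar>^3)^2)" unfolding P1_def by (simp only: power_divide power_mult_distrib) simp
      also have "\<dots> = 1 / (pi\<^sup>2 * \<bar>\<xi>\<bar>^6)" by (simp only: p6)
      also have "\<dots> \<le> 1 / (pi\<^sup>2 * (W^3 / 8))"
      proof -
        have x6: "\<bar>\<xi>\<bar>^6 > 0" using big by simp
        have w3: "W^3 > 0" using W1 by simp
        have "pi\<^sup>2 * (W^3 / 8) \<le> pi\<^sup>2 * \<bar>\<xi>\<bar>^6" using W3 by (intro mult_left_mono) auto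
        moreover have "0 < pi\<^sup>2 * \<bar>\<xi>\<bar>^6 * (pi\<^sup>2 * (W^3 / 8))" using x6 w3 by (intro mult_pos_pos) auto
        ultimately show ?thesis by (intro divide_left_mono) auto
      qed
      also have "\<dots> = 8 / pi\<^sup>2 * W powr (-3)"
        using W1 by (simp add: powr_minus powr_realpow divide_simps)
      finally show ?thesis .
    qed
    define Kc where "Kc = 8 * cb * 2 powr \<bar>s\<bar> / pi\<^sup>2"
    have Kc0: "Kc \<ge> 0" unfolding Kc_def using Cb(2) by simp
    have r0: "R \<le> W powr (k + \<epsilon>) * (8 / pi\<^sup>2 * W powr (-3)) * cb * W powr m * (2 powr \<bar>s\<bar> * W powr (-s))"
      unfolding R_def using P1sq Cb(2) by (intro mult_right_mono mult_left_mono) auto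
    have r1: "W powr (k + \<epsilon>) * (8 / pi\<^sup>2 * W powr (-3)) * cb * W powr m * (2 powr \<bar>s\<bar> * W powr (-s))
       = Kc * (W powr (k + \<epsilon>) * W powr (-3) * W powr m * W powr (-s))"
      unfolding Kc_def by (simp add: ac_simps)
    have r2: "W powr (k + \<epsilon>) * W powr (-3) * W powr m * W powr (-s) = W powr e"
      unfolding e_def m_def using W1 by (simp add: powr_add[symmetric]) (auto simp: max_def algebra_simps)
    have r3: "W powr e \<le> (1 / \<delta>\<^sup>2) powr e"
    proof (rule powr_mono2')
      show "e \<le> 0" using e unfolding e_def .
      show "0 < 1 / \<delta>\<^sup>2" using \<delta> by simp
      have "(1/\<delta>)^2 \<le> \<bar>\<xi>\<bar>^2" using True \<delta> by (intro power_mono) auto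
      then show "1 / \<delta>\<^sup>2 \<le> W" unfolding W_def by (simp add: power_divide)
    qed
    have r4: "(1 / \<delta>\<^sup>2) powr e = \<delta> powr (-2 * e)"
    proof -
      have eq: "1 / \<delta>\<^sup>2 = \<delta> powr (-2)"
        using \<delta> by (simp add: powr_minus powr_numeral inverse_eq_divide)
      show ?thesis unfolding eq by (rule powr_powr)
    qed
    have "R \<le> Kc * W powr e" using r0 r1 r2 by simp
    also have "\<dots> \<le> Kc * \<delta> powr (-2 * e)" using r3 r4 Kc0 by (intro mult_left_mono) auto
    finally have "R \<le> Kc * \<delta> powr (-2 * e)" .
    then show "R \<le> ?K" unfolding Kc_def e_def cb_def Cb_def .
  qed simp
  finally show ?thesis .
qed



lemma pointwise_b:
  fixes f g :: "real \<Rightarrow> complex" and k s \<epsilon> \<beta> \<delta> \<xi> :: real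
  assumes fm[measurable]: "f \<in> borel_measurable borel" and gm[measurable]: "g \<in> borel_measurable borel"
    and k: "k \<ge> 0" and \<beta>: "\<beta> > 1/2" and \<delta>: "0 < \<delta>" "\<delta> \<le> 1/10^7"
    and e: "s + \<epsilon> - 2 - k + max (\<beta> - k) 0 \<le> 0"
  shows "ennreal ((1 + \<xi>\<^sup>2) powr (s + \<epsilon>) * (cmod (Bv_hat \<delta> f g \<xi>))\<^sup>2)
     \<le> ennreal (8 * enn2real (\<integral>\<^sup>+x. ennreal ((1 + x\<^sup>2) powr (-\<beta>)) \<partial>lborel) * 4 powr k
                 * 10201 powr (max (\<beta> - k) 0) / pi\<^sup>2
                 * 100 powr (-2 * (s + \<epsilon> - 2 - k + max (\<beta> - k) 0))
                 * \<delta> powr (-2 * (s + \<epsilon> - 2 - k + max (\<beta> - k) 0)))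
       * (\<integral>\<^sup>+\<xi>1. ennreal ((1 + \<xi>1\<^sup>2) powr k * (cmod (f \<xi>1))\<^sup>2)
                   * ennreal ((1 + (\<xi>1 - \<xi>)\<^sup>2) powr k * (cmod (g (\<xi>1 - \<xi>)))\<^sup>2) \<partial>lborel)"
  (is "?L \<le> ennreal ?K * ?J")
proof (cases "\<bar>\<xi>\<bar> > 1 / (100 * \<delta>)")
  case False
  have "V_set \<delta> \<xi> = {}"
  proof (rule ccontr)
    assume "V_set \<delta> \<xi> \<noteq> {}"
    then obtain x where "1 / \<delta> < \<bar>x\<bar>" "\<bar>x\<bar> < 100 * \<bar>\<xi>\<bar>" unfolding V_set_def by auto
    then have "1 / \<delta> < 100 * \<bar>\<xi>\<bar>" by linarith
    then have "1 / (100 * \<delta>) < \<bar>\<xi>\<bar>" using \<delta> by (simp add: field_simps)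
    then show False using False by simp
  qed
  then have "Bv_hat \<delta> f g \<xi> = 0" unfolding Bv_hat_def set_lebesgue_integral_def by simp
  then show ?thesis by simp
next
  case True
  define Cb where "Cb = (\<integral>\<^sup>+x. ennreal ((1 + x\<^sup>2) powr (-\<beta>)) \<partial>lborel)"
  define cb where "cb = enn2real Cb"
  have Cb: "Cb = ennreal cb" "cb \<ge> 0"
    using w_int_finite[OF \<beta>] unfolding cb_def Cb_def by (auto simp: less_top ennreal_enn2real)
  define W where "W = 1 + \<xi>\<^sup>2"
  define m where "m = max (\<beta> - k) 0"
  define V where "V = V_set \<delta> \<xi>"
  define S where "S = {x::real. \<bar>x\<bar> < 100 * \<bar>\<xi>\<bar>}"
  have d7: "1 / (100 * \<delta>) \<ge> 10^5" using \<delta> by (simp add: field_simps)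
  have big: "\<bar>\<xi>\<bar> > 10^5" using True d7 by linarith
  have V_eq: "V = {x. 1 / \<delta> < \<bar>x\<bar> \<and> \<bar>x\<bar> < 100 * \<bar>\<xi>\<bar>}" unfolding V_def V_set_def by auto
  have Vm[measurable]: "V \<in> sets borel" unfolding V_eq by measurable
  have Sm[measurable]: "S \<in> sets borel" unfolding S_def by measurable
  have VS: "V \<subseteq> S" unfolding V_eq S_def by auto
  define X where "X = (\<integral>\<^sup>+x. indicator V x * ennreal (cmod (f x) * cmod (g (x - \<xi>))) \<partial>lborel)"
  define P1 where "P1 = 1 / (pi * \<xi>\<^sup>2)"
  have xi3: "\<bar>\<xi>\<bar>^3 > 0" using big by simp
  have P1pos: "P1 \<ge> 0" unfolding P1_def by simp
  have s1: "ennreal (cmod (Bv_hat \<delta> f g \<xi>)) \<le> ennreal P1 * X"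
  proof -
    define h where "h x = f x * cnj (g (x - \<xi>)) / (\<i> * complex_of_real (Phi_v \<xi> x (\<xi> - x)))" for x
    have Bv: "Bv_hat \<delta> f g \<xi> = (\<i> * complex_of_real \<xi> / (2 * complex_of_real pi)) * set_lebesgue_integral lborel V h"
      unfolding Bv_hat_def V_def h_def by simp
    have "ennreal (norm (set_lebesgue_integral lborel V h)) \<le> (\<integral>\<^sup>+x. indicator V x * ennreal (norm (h x)) \<partial>lborel)"
      by (rule set_int_norm_bound)
    also have "\<dots> \<le> (\<integral>\<^sup>+x. ennreal (2 / \<bar>\<xi>\<bar>^3) * (indicator V x * ennreal (cmod (f x) * cmod (g (x - \<xi>)))) \<partial>lborel)"
    proof (intro nn_integral_mono)
      fix x
      show "indicator V x * ennreal (norm (h x)) \<le> ennreal (2 / \<bar>\<xi>\<bar>^3) * (indicator V x * ennreal (cmod (f x) * cmod (g (x - \<xi>))))"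
      proof (cases "x \<in> V")
        case False then show ?thesis by simp
      next
        case xV: True
        then have "\<bar>x\<bar> < 100 * \<bar>\<xi>\<bar>" unfolding V_eq by simp
        from Phi_v_bound[OF big this] have Ph: "\<bar>Phi_v \<xi> x (\<xi> - x)\<bar> \<ge> \<bar>\<xi>\<bar>^3 / 2" .
        have Ph0: "\<bar>Phi_v \<xi> x (\<xi> - x)\<bar> > 0" using Ph xi3 by linarith
        have "norm (h x) = cmod (f x) * cmod (g (x - \<xi>)) / \<bar>Phi_v \<xi> x (\<xi> - x)\<bar>"
          unfolding h_def by (simp add: norm_divide norm_mult)
        also have "\<dots> \<le> cmod (f x) * cmod (g (x - \<xi>)) / (\<bar>\<xi>\<bar>^3 / 2)"
          using Ph xi3 Ph0 by (intro divide_left_mono) (auto intro: mult_pos_pos)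
        also have "\<dots> = 2 / \<bar>\<xi>\<bar>^3 * (cmod (f x) * cmod (g (x - \<xi>)))" by simp
        finally have "norm (h x) \<le> 2 / \<bar>\<xi>\<bar>^3 * (cmod (f x) * cmod (g (x - \<xi>)))" .
        then show ?thesis using xV by (simp add: ennreal_mult[symmetric] ennreal_leI)
      qed
    qed
    also have "\<dots> = ennreal (2 / \<bar>\<xi>\<bar>^3) * X"
      unfolding X_def by (rule nn_integral_cmult) measurable
    finally have I: "ennreal (norm (set_lebesgue_integral lborel V h)) \<le> ennreal (2 / \<bar>\<xi>\<bar>^3) * X" .
    have "ennreal (cmod (Bv_hat \<delta> f g \<xi>)) = ennreal (\<bar>\<xi>\<bar> / (2 * pi)) * ennreal (norm (set_lebesgue_integral lborel V h))"
    proof -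
      have n2: "cmod (2 * complex_of_real pi) = 2 * pi" by (simp add: norm_mult)
      have n1: "cmod (\<i> * complex_of_real \<xi>) = \<bar>\<xi>\<bar>" by (simp add: norm_mult)
      have "cmod (Bv_hat \<delta> f g \<xi>) = \<bar>\<xi>\<bar> / (2 * pi) * norm (set_lebesgue_integral lborel V h)"
        unfolding Bv by (simp add: norm_divide norm_mult n1 n2)
      then show ?thesis by (simp add: ennreal_mult[symmetric])
    qed
    also have "\<dots> \<le> ennreal (\<bar>\<xi>\<bar> / (2 * pi)) * (ennreal (2 / \<bar>\<xi>\<bar>^3) * X)"
      by (intro mult_left_mono I) simp
    also have "\<dots> = ennreal (\<bar>\<xi>\<bar> / (2 * pi) * (2 / \<bar>\<xi>\<bar>^3)) * X"
      by (simp add: ennreal_mult[symmetric] mult.assoc[symmetric])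
    also have "\<bar>\<xi>\<bar> / (2 * pi) * (2 / \<bar>\<xi>\<bar>^3) = P1"
    proof -
      have "\<bar>\<xi>\<bar>^3 = \<bar>\<xi>\<bar> * \<xi>\<^sup>2" by (simp add: power3_eq_cube power2_eq_square abs_mult_self)
      then show ?thesis unfolding P1_def using big by (simp add: field_simps)
    qed
    finally show ?thesis .
  qed

  define A2 where "A2 = (\<integral>\<^sup>+x. indicator V x * ennreal ((1 + x\<^sup>2) powr (-k) * (1 + (x - \<xi>)\<^sup>2) powr (-k)) \<partial>lborel)"
  define B2 where "B2 = (\<integral>\<^sup>+x. indicator V x * (ennreal ((1 + x\<^sup>2) powr k * (cmod (f x))\<^sup>2)
                   * ennreal ((1 + (x - \<xi>)\<^sup>2) powr k * (cmod (g (x - \<xi>)))\<^sup>2)) \<partial>lborel)"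
  have s2: "X^2 \<le> A2 * B2"
  proof -
    define a where "a x = indicator V x * ennreal ((1 + x\<^sup>2) powr (-(k/2)) * (1 + (x - \<xi>)\<^sup>2) powr (-(k/2)))" for x :: real
    define b where "b x = indicator V x * ennreal (((1 + x\<^sup>2) powr (k/2) * (1 + (x - \<xi>)\<^sup>2) powr (k/2)) * (cmod (f x) * cmod (g (x - \<xi>))))" for x :: real
    have am[measurable]: "a \<in> borel_measurable lborel" unfolding a_def by measurable
    have bm[measurable]: "b \<in> borel_measurable lborel" unfolding b_def by measurable
    have pw: "(y::real) > 0 \<Longrightarrow> y powr (-(k/2)) * y powr (k/2) = 1" for y
      by (simp add: powr_add[symmetric])
    have sq1: "(y::real) > 0 \<Longrightarrow> (y powr (-(k/2)))^2 = y powr (-k)" for y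
      by (simp add: power2_eq_square powr_add[symmetric])
    have sq2: "(y::real) > 0 \<Longrightarrow> (y powr (k/2))^2 = y powr k" for y
      by (simp add: power2_eq_square powr_add[symmetric])
    have "X = (\<integral>\<^sup>+x. a x * b x \<partial>lborel)"
      unfolding X_def
    proof (intro nn_integral_cong)
      fix x :: real
      have "((1 + x\<^sup>2) powr (-(k/2)) * (1 + (x - \<xi>)\<^sup>2) powr (-(k/2))) *
            (((1 + x\<^sup>2) powr (k/2) * (1 + (x - \<xi>)\<^sup>2) powr (k/2)) * (cmod (f x) * cmod (g (x - \<xi>))))
          = ((1 + x\<^sup>2) powr (-(k/2)) * (1 + x\<^sup>2) powr (k/2)) * ((1 + (x - \<xi>)\<^sup>2) powr (-(k/2)) * (1 + (x - \<xi>)\<^sup>2) powr (k/2))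
             * (cmod (f x) * cmod (g (x - \<xi>)))"
        by (simp only: ac_simps)
      also have "\<dots> = cmod (f x) * cmod (g (x - \<xi>))"
        using pw[of "1 + x\<^sup>2"] pw[of "1 + (x - \<xi>)\<^sup>2"] by simp
      finally have eq: "((1 + x\<^sup>2) powr (-(k/2)) * (1 + (x - \<xi>)\<^sup>2) powr (-(k/2))) *
            (((1 + x\<^sup>2) powr (k/2) * (1 + (x - \<xi>)\<^sup>2) powr (k/2)) * (cmod (f x) * cmod (g (x - \<xi>))))
          = cmod (f x) * cmod (g (x - \<xi>))" .
      show "indicator V x * ennreal (cmod (f x) * cmod (g (x - \<xi>))) = a x * b x"
        unfolding a_def b_def by (auto simp: indicator_def ennreal_mult[symmetric] eq)
    qed
    moreover have "(\<integral>\<^sup>+x. a x ^ 2 \<partial>lborel) = A2"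
      unfolding A2_def a_def
    proof (intro nn_integral_cong)
      fix x :: real
      have "(ennreal ((1 + x\<^sup>2) powr (-(k/2)) * (1 + (x - \<xi>)\<^sup>2) powr (-(k/2))))^2
          = ennreal (((1 + x\<^sup>2) powr (-(k/2)) * (1 + (x - \<xi>)\<^sup>2) powr (-(k/2)))^2)"
        by (simp add: ennreal_power)
      also have "((1 + x\<^sup>2) powr (-(k/2)) * (1 + (x - \<xi>)\<^sup>2) powr (-(k/2)))^2
          = (1 + x\<^sup>2) powr (-k) * (1 + (x - \<xi>)\<^sup>2) powr (-k)"
        by (simp only: power_mult_distrib sq1 w_pos)
      finally have eq: "(ennreal ((1 + x\<^sup>2) powr (-(k/2)) * (1 + (x - \<xi>)\<^sup>2) powr (-(k/2))))^2
          = ennreal ((1 + x\<^sup>2) powr (-k) * (1 + (x - \<xi>)\<^sup>2) powr (-k))" .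
      show "(indicator V x * ennreal ((1 + x\<^sup>2) powr (-(k/2)) * (1 + (x - \<xi>)\<^sup>2) powr (-(k/2))))^2
          = indicator V x * ennreal ((1 + x\<^sup>2) powr (-k) * (1 + (x - \<xi>)\<^sup>2) powr (-k))"
        by (auto simp: indicator_def eq)
    qed
    moreover have "(\<integral>\<^sup>+x. b x ^ 2 \<partial>lborel) = B2"
      unfolding B2_def b_def
    proof (intro nn_integral_cong)
      fix x :: real
      have "(ennreal (((1 + x\<^sup>2) powr (k/2) * (1 + (x - \<xi>)\<^sup>2) powr (k/2)) * (cmod (f x) * cmod (g (x - \<xi>)))))^2
          = ennreal ((((1 + x\<^sup>2) powr (k/2) * (1 + (x - \<xi>)\<^sup>2) powr (k/2)) * (cmod (f x) * cmod (g (x - \<xi>))))^2)"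
        by (simp add: ennreal_power)
      also have "(((1 + x\<^sup>2) powr (k/2) * (1 + (x - \<xi>)\<^sup>2) powr (k/2)) * (cmod (f x) * cmod (g (x - \<xi>))))^2
          = ((1 + x\<^sup>2) powr k * (cmod (f x))\<^sup>2) * ((1 + (x - \<xi>)\<^sup>2) powr k * (cmod (g (x - \<xi>)))\<^sup>2)"
        by (simp only: power_mult_distrib sq2 w_pos ac_simps)
      also have "ennreal \<dots> = ennreal ((1 + x\<^sup>2) powr k * (cmod (f x))\<^sup>2) * ennreal ((1 + (x - \<xi>)\<^sup>2) powr k * (cmod (g (x - \<xi>)))\<^sup>2)"
        by (simp add: ennreal_mult)
      finally have eq: "(ennreal (((1 + x\<^sup>2) powr (k/2) * (1 + (x - \<xi>)\<^sup>2) powr (k/2)) * (cmod (f x) * cmod (g (x - \<xi>)))))^2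
          = ennreal ((1 + x\<^sup>2) powr k * (cmod (f x))\<^sup>2) * ennreal ((1 + (x - \<xi>)\<^sup>2) powr k * (cmod (g (x - \<xi>)))\<^sup>2)" .
      show "(indicator V x * ennreal (((1 + x\<^sup>2) powr (k/2) * (1 + (x - \<xi>)\<^sup>2) powr (k/2)) * (cmod (f x) * cmod (g (x - \<xi>)))))^2
          = indicator V x * (ennreal ((1 + x\<^sup>2) powr k * (cmod (f x))\<^sup>2) * ennreal ((1 + (x - \<xi>)\<^sup>2) powr k * (cmod (g (x - \<xi>)))\<^sup>2))"
        by (auto simp: indicator_def eq)
    qed
    ultimately show ?thesis using Cauchy_Schwarz_nn_integral[OF am bm] by simp
  qed
  have sB: "B2 \<le> ?J"
    unfolding B2_def by (intro nn_integral_mono) (auto simp: indicator_def)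
  define I1 where "I1 = (\<integral>\<^sup>+x. indicator S x * ennreal ((1 + x\<^sup>2) powr (-k)) \<partial>lborel)"
  define I2 where "I2 = (\<integral>\<^sup>+x. indicator S x * ennreal ((1 + (x - \<xi>)\<^sup>2) powr (-k)) \<partial>lborel)"
  have s3a: "A2 \<le> ennreal (4 powr k * W powr (-k)) * (I1 + I2)"
  proof -
    have "A2 \<le> (\<integral>\<^sup>+x. ennreal (4 powr k * W powr (-k)) *
             (indicator S x * ennreal ((1 + x\<^sup>2) powr (-k)) + indicator S x * ennreal ((1 + (x - \<xi>)\<^sup>2) powr (-k))) \<partial>lborel)"
      unfolding A2_def
    proof (intro nn_integral_mono)
      fix x :: real
      show "indicator V x * ennreal ((1 + x\<^sup>2) powr (-k) * (1 + (x - \<xi>)\<^sup>2) powr (-k))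
         \<le> ennreal (4 powr k * W powr (-k)) *
             (indicator S x * ennreal ((1 + x\<^sup>2) powr (-k)) + indicator S x * ennreal ((1 + (x - \<xi>)\<^sup>2) powr (-k)))"
      proof (cases "x \<in> V")
        case False then show ?thesis by simp
      next
        case xV: True
        then have xS: "x \<in> S" using VS by auto
        have "(1 + x\<^sup>2) powr (-k) * (1 + (x - \<xi>)\<^sup>2) powr (-k)
           \<le> 4 powr k * W powr (-k) * ((1 + x\<^sup>2) powr (-k) + (1 + (x - \<xi>)\<^sup>2) powr (-k))"
          unfolding W_def by (rule prod_split[OF k]) simp
        then show ?thesis using xV xS
          by (simp add: ennreal_mult[symmetric] ennreal_plus[symmetric] ennreal_leI del: ennreal_plus)
      qed
    qed
    also have "\<dots> = ennreal (4 powr k * W powr (-k)) * (I1 + I2)"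
      unfolding I1_def I2_def by (subst nn_integral_cmult) (measurable, subst nn_integral_add, auto)
    finally show ?thesis .
  qed
  have s3b: "I1 \<le> ennreal cb * ennreal ((10201 * W) powr m)"
  proof -
    have "x \<in> S \<Longrightarrow> 1 + x\<^sup>2 \<le> 10201 * W" for x
    proof -
      assume "x \<in> S"
      then have "\<bar>x\<bar> \<le> 100 * \<bar>\<xi>\<bar>" unfolding S_def by simp
      then have "\<bar>x\<bar>^2 \<le> (100 * \<bar>\<xi>\<bar>)^2" by (intro power_mono) auto
      then have "x\<^sup>2 \<le> 10000 * \<xi>\<^sup>2" by (simp add: power_mult_distrib)
      then show ?thesis unfolding W_def using zero_le_power2[of \<xi>] by (smt (verit))
    qed
    from w_pow_bound[OF k \<beta> this Sm] show ?thesis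
      unfolding I1_def m_def Cb_def[symmetric] Cb(1) .
  qed
  have s3c: "I2 \<le> ennreal cb * ennreal ((10201 * W) powr m)"
  proof -
    define S' where "S' = {y::real. \<bar>\<xi> + y\<bar> < 100 * \<bar>\<xi>\<bar>}"
    have S'm[measurable]: "S' \<in> sets borel" unfolding S'_def by measurable
    have "I2 = (\<integral>\<^sup>+y. indicator S (\<xi> + 1 * y) * ennreal ((1 + ((\<xi> + 1 * y) - \<xi>)\<^sup>2) powr (-k)) \<partial>lborel)"
      unfolding I2_def
      using nn_integral_real_affine[of "\<lambda>x. indicator S x * ennreal ((1 + (x - \<xi>)\<^sup>2) powr (-k))" 1 \<xi>] by simp
    also have "\<dots> = (\<integral>\<^sup>+y. indicator S' y * ennreal ((1 + y\<^sup>2) powr (-k)) \<partial>lborel)"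
      by (intro nn_integral_cong) (auto simp: S_def S'_def indicator_def)
    also have "\<dots> \<le> ennreal cb * ennreal ((10201 * W) powr m)"
    proof -
      have "y \<in> S' \<Longrightarrow> 1 + y\<^sup>2 \<le> 10201 * W" for y
      proof -
        assume "y \<in> S'"
        then have "\<bar>y\<bar> \<le> 101 * \<bar>\<xi>\<bar>" unfolding S'_def mem_Collect_eq by (smt (verit))
        then have "\<bar>y\<bar>^2 \<le> (101 * \<bar>\<xi>\<bar>)^2" by (intro power_mono) auto
        then have "y\<^sup>2 \<le> 10201 * \<xi>\<^sup>2" by (simp add: power_mult_distrib)
        then show ?thesis unfolding W_def using zero_le_power2[of \<xi>] by (smt (verit))
      qed
      from w_pow_bound[OF k \<beta> this S'm] show ?thesis
        unfolding m_def Cb_def[symmetric] Cb(1) .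
    qed
    finally show ?thesis .
  qed
  define R where "R = W powr (s + \<epsilon>) * P1\<^sup>2 * (4 powr k * W powr (-k)) * (2 * (cb * (10201 * W) powr m))"
  have L: "?L = ennreal (W powr (s + \<epsilon>)) * (ennreal (cmod (Bv_hat \<delta> f g \<xi>)))^2"
    unfolding W_def by (simp add: ennreal_mult ennreal_power)
  have "(ennreal (cmod (Bv_hat \<delta> f g \<xi>)))^2 \<le> (ennreal P1 * X)^2"
    using s1 by (intro power_mono) auto
  also have "\<dots> = ennreal (P1\<^sup>2) * X^2"
    using P1pos by (simp add: power_mult_distrib ennreal_power)
  also have "\<dots> \<le> ennreal (P1\<^sup>2) * ((ennreal (4 powr k * W powr (-k)) * (ennreal cb * ennreal ((10201 * W) powr m) + ennreal cb * ennreal ((10201 * W) powr m))) * ?J)"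
    using s2 s3a s3b s3c sB
    by (intro mult_left_mono order.trans[OF s2] mult_mono add_mono order.trans[OF s3a]) auto
  finally have "?L \<le> ennreal (W powr (s + \<epsilon>)) * (ennreal (P1\<^sup>2) * ((ennreal (4 powr k * W powr (-k)) * (ennreal cb * ennreal ((10201 * W) powr m) + ennreal cb * ennreal ((10201 * W) powr m))) * ?J))"
    unfolding L by (intro mult_left_mono) auto
  also have "\<dots> = ennreal R * ?J"
  proof -
    have "ennreal cb * ennreal ((10201 * W) powr m) + ennreal cb * ennreal ((10201 * W) powr m)
        = ennreal (2 * (cb * (10201 * W) powr m))"
      using Cb(2) by (simp add: ennreal_mult[symmetric] ennreal_plus[symmetric] del: ennreal_plus)
    then show ?thesis unfolding R_def using Cb(2) by (simp add: ennreal_mult' mult.assoc)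
  qed
  also have "\<dots> \<le> ennreal ?K * ?J"
  proof (intro mult_right_mono ennreal_leI)
    define e where "e = s + \<epsilon> - 2 - k + max (\<beta> - k) 0"
    have W1: "W \<ge> 1" unfolding W_def by simp
    have xi1: "\<xi>\<^sup>2 \<ge> 1"
    proof -
      have "1 \<le> \<bar>\<xi>\<bar>" using big by simp
      then have "1^2 \<le> \<bar>\<xi>\<bar>^2" by (intro power_mono) auto
      then show ?thesis by simp
    qed
    have P1sq: "P1\<^sup>2 \<le> 4 / pi\<^sup>2 * W powr (-2)"
    proof -
      have "W \<le> 2 * \<xi>\<^sup>2" unfolding W_def using xi1 by simp
      then have "W^2 \<le> (2 * \<xi>\<^sup>2)^2" using W1 by (intro power_mono) auto
      then have W3: "W^2 \<le> 4 * \<xi>^4" by (simp add: power_mult_distrib flip: power_mult)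
      have x4: "\<xi>^4 > 0" using big by simp
      have w2: "W^2 > 0" using W1 by simp
      have "P1\<^sup>2 = 1 / (pi\<^sup>2 * \<xi>^4)" unfolding P1_def by (simp add: power_mult_distrib power_divide flip: power_mult)
      also have "\<dots> \<le> 1 / (pi\<^sup>2 * (W^2 / 4))"
      proof -
        have "pi\<^sup>2 * (W^2 / 4) \<le> pi\<^sup>2 * \<xi>^4" using W3 by (intro mult_left_mono) auto
        moreover have "0 < pi\<^sup>2 * \<xi>^4 * (pi\<^sup>2 * (W^2 / 4))" using x4 w2 by (intro mult_pos_pos) auto
        ultimately show ?thesis by (intro divide_left_mono) auto
      qed
      also have "\<dots> = 4 / pi\<^sup>2 * W powr (-2)"
        using W1 by (simp add: powr_minus powr_realpow divide_simps)
      finally show ?thesis .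
    qed
    define Kc where "Kc = 8 * cb * 4 powr k * 10201 powr m / pi\<^sup>2"
    have Kc0: "Kc \<ge> 0" unfolding Kc_def using Cb(2) by simp
    have r0: "R \<le> W powr (s + \<epsilon>) * (4 / pi\<^sup>2 * W powr (-2)) * (4 powr k * W powr (-k)) * (2 * (cb * (10201 * W) powr m))"
      unfolding R_def using P1sq Cb(2) by (intro mult_right_mono mult_left_mono) auto
    have r1: "W powr (s + \<epsilon>) * (4 / pi\<^sup>2 * W powr (-2)) * (4 powr k * W powr (-k)) * (2 * (cb * (10201 * W) powr m))
       = Kc * (W powr (s + \<epsilon>) * W powr (-2) * W powr (-k) * W powr m)"
      unfolding Kc_def using W1 by (simp add: powr_mult ac_simps)
    have r2: "W powr (s + \<epsilon>) * W powr (-2) * W powr (-k) * W powr m = W powr e"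
      unfolding e_def m_def using W1 by (simp add: powr_add[symmetric] algebra_simps)
    have r3: "W powr e \<le> (1 / (100 * \<delta>)\<^sup>2) powr e"
    proof (rule powr_mono2')
      show "e \<le> 0" using e unfolding e_def .
      show "0 < 1 / (100 * \<delta>)\<^sup>2" using \<delta> by simp
      have "(1/(100*\<delta>))^2 \<le> \<bar>\<xi>\<bar>^2" using True \<delta> by (intro power_mono) auto
      then show "1 / (100 * \<delta>)\<^sup>2 \<le> W" unfolding W_def by (simp add: power_divide)
    qed
    have r4: "(1 / (100 * \<delta>)\<^sup>2) powr e = 100 powr (-2 * e) * \<delta> powr (-2 * e)"
    proof -
      have eq: "1 / (100 * \<delta>)\<^sup>2 = (100 * \<delta>) powr (-2)"
        using \<delta> by (simp add: powr_minus powr_numeral inverse_eq_divide)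
      have "(1 / (100 * \<delta>)\<^sup>2) powr e = (100 * \<delta>) powr (-2 * e)" unfolding eq by (rule powr_powr)
      also have "\<dots> = 100 powr (-2 * e) * \<delta> powr (-2 * e)" using \<delta> by (simp add: powr_mult)
      finally show ?thesis .
    qed
    have "R \<le> Kc * W powr e" using r0 r1 r2 by simp
    also have "\<dots> \<le> Kc * (100 powr (-2 * e) * \<delta> powr (-2 * e))" using r3 r4 Kc0 by (intro mult_left_mono) auto
    finally have "R \<le> Kc * 100 powr (-2 * e) * \<delta> powr (-2 * e)" by (simp add: mult.assoc)
    then show "R \<le> ?K" unfolding Kc_def e_def cb_def Cb_def m_def .
  qed simp
  finally show ?thesis .
qed


lemma final_step:
  fixes L :: "real \<Rightarrow> real" and J :: "real \<Rightarrow> ennreal"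
  assumes pw: "\<And>\<xi>. ennreal (L \<xi>) \<le> ennreal (K * \<delta> powr (2 * \<theta>)) * J \<xi>"
    and Jm: "J \<in> borel_measurable lborel"
    and Jb: "(\<integral>\<^sup>+\<xi>. J \<xi> \<partial>lborel) \<le> ennreal (A\<^sup>2) * ennreal (B\<^sup>2)"
    and K: "K \<ge> 0" and \<delta>: "\<delta> > 0" and AB: "A \<ge> 0" "B \<ge> 0"
  shows "(\<integral>\<^sup>+\<xi>. ennreal (L \<xi>) \<partial>lborel) \<le> ennreal ((sqrt K * \<delta> powr \<theta> * A * B)\<^sup>2)"
proof -
  have "(\<integral>\<^sup>+\<xi>. ennreal (L \<xi>) \<partial>lborel) \<le> (\<integral>\<^sup>+\<xi>. ennreal (K * \<delta> powr (2 * \<theta>)) * J \<xi> \<partial>lborel)"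
    by (intro nn_integral_mono pw)
  also have "\<dots> = ennreal (K * \<delta> powr (2 * \<theta>)) * (\<integral>\<^sup>+\<xi>. J \<xi> \<partial>lborel)"
    by (rule nn_integral_cmult[OF Jm])
  also have "\<dots> \<le> ennreal (K * \<delta> powr (2 * \<theta>)) * (ennreal (A\<^sup>2) * ennreal (B\<^sup>2))"
    by (intro mult_left_mono Jb) simp
  also have "\<dots> = ennreal (K * \<delta> powr (2 * \<theta>) * A\<^sup>2 * B\<^sup>2)"
    using K by (simp add: ennreal_mult[symmetric] mult.assoc)
  also have "K * \<delta> powr (2 * \<theta>) * A\<^sup>2 * B\<^sup>2 = (sqrt K * \<delta> powr \<theta> * A * B)\<^sup>2"
  proof -
    have "(\<delta> powr \<theta>)\<^sup>2 = \<delta> powr (2 * \<theta>)"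
      using \<delta> by (simp add: power2_eq_square powr_add[symmetric])
    moreover have "(sqrt K)\<^sup>2 = K" using K by simp
    ultimately show ?thesis by (simp add: power_mult_distrib)
  qed
  finally show ?thesis .
qed

theorem mainTheorem16:
  shows "\<exists>\<delta>0 > (0::real). \<forall>k s. (k, s) \<in> admissible \<longrightarrow>
    (\<forall>\<epsilon>::real. \<epsilon> < min (3 - k + s) (s + 5/2) \<longrightarrow>
      (\<exists>\<theta> > (0::real). \<exists>C::real. \<forall>\<delta>u \<in> {0<..\<delta>0}.
        \<forall>(u1 :: real \<Rightarrow> real \<Rightarrow> complex) (v2 :: real \<Rightarrow> real \<Rightarrow> complex) (A::real) (B::real).
          (\<forall>t. u1 t \<in> borel_measurable lborel \<and> v2 t \<in> borel_measurable lborel) \<longrightarrow>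
          A \<ge> 0 \<longrightarrow> B \<ge> 0 \<longrightarrow>
          (\<forall>t. sob_sq k (u1 t) \<le> ennreal (A\<^sup>2)) \<longrightarrow>
          (\<forall>t. sob_sq s (v2 t) \<le> ennreal (B\<^sup>2)) \<longrightarrow>
          (\<forall>t. sob_sq (k + \<epsilon>) (Bu_hat \<delta>u (u1 t) (v2 t))
                 \<le> ennreal ((C * \<delta>u powr \<theta> * A * B)\<^sup>2)))) \<and>
    (\<forall>\<epsilon>::real. \<epsilon> < min (2 - s + k) (4 * k - s) \<longrightarrow>
      (\<exists>\<theta> > (0::real). \<exists>C::real. \<forall>\<delta>v \<in> {0<..\<delta>0}.
        \<forall>(u1 :: real \<Rightarrow> real \<Rightarrow> complex) (u2 :: real \<Rightarrow> real \<Rightarrow> complex) (A::real) (B::real).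
          (\<forall>t. u1 t \<in> borel_measurable lborel \<and> u2 t \<in> borel_measurable lborel) \<longrightarrow>
          A \<ge> 0 \<longrightarrow> B \<ge> 0 \<longrightarrow>
          (\<forall>t. sob_sq k (u1 t) \<le> ennreal (A\<^sup>2)) \<longrightarrow>
          (\<forall>t. sob_sq k (u2 t) \<le> ennreal (B\<^sup>2)) \<longrightarrow>
          (\<forall>t. sob_sq (s + \<epsilon>) (Bv_hat \<delta>v (u1 t) (u2 t))
                 \<le> ennreal ((C * \<delta>v powr \<theta> * A * B)\<^sup>2))))"
proof (rule exI[of _ "1/10^7"], intro conjI allI impI)
  show "(0::real) < 1/10^7" by simp
next
  fix k s :: real
  assume adm: "(k, s) \<in> admissible"
  then have k0: "k \<ge> 0" and adm': "s > -3/4" "s < 4 * k" "-2 < k - s" "k - s < 3"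
    unfolding admissible_def by auto
  {
    fix \<epsilon> :: real
    assume he: "\<epsilon> < min (3 - k + s) (s + 5/2)"
    define \<beta> where "\<beta> = (1/2 + (3 + s - \<epsilon>)) / 2"
    have \<beta>: "\<beta> > 1/2" "\<beta> < 3 + s - \<epsilon>" using he unfolding \<beta>_def by auto
    define e where "e = max k \<beta> + \<epsilon> - s - 3"
    have e0: "e < 0" unfolding e_def using he \<beta> by (auto simp: max_def)
    define \<theta> where "\<theta> = - e"
    have \<theta>pos: "\<theta> > 0" unfolding \<theta>_def using e0 by simp
    define K where "K = 8 * enn2real (\<integral>\<^sup>+x. ennreal ((1 + x\<^sup>2) powr (-\<beta>)) \<partial>lborel) * 2 powr \<bar>s\<bar> / pi\<^sup>2"
    have K0: "K \<ge> 0" unfolding K_def by simp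
    show "\<exists>\<theta> > (0::real). \<exists>C::real. \<forall>\<delta>u \<in> {0<..1/10^7}.
        \<forall>(u1 :: real \<Rightarrow> real \<Rightarrow> complex) (v2 :: real \<Rightarrow> real \<Rightarrow> complex) (A::real) (B::real).
          (\<forall>t. u1 t \<in> borel_measurable lborel \<and> v2 t \<in> borel_measurable lborel) \<longrightarrow>
          A \<ge> 0 \<longrightarrow> B \<ge> 0 \<longrightarrow>
          (\<forall>t. sob_sq k (u1 t) \<le> ennreal (A\<^sup>2)) \<longrightarrow>
          (\<forall>t. sob_sq s (v2 t) \<le> ennreal (B\<^sup>2)) \<longrightarrow>
          (\<forall>t. sob_sq (k + \<epsilon>) (Bu_hat \<delta>u (u1 t) (v2 t))
                 \<le> ennreal ((C * \<delta>u powr \<theta> * A * B)\<^sup>2))"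
    proof (rule exI[of _ \<theta>], rule conjI[OF \<theta>pos], rule exI[of _ "sqrt K"], intro ballI allI impI)
      fix \<delta> :: real and u1 v2 :: "real \<Rightarrow> real \<Rightarrow> complex" and A B :: real and t :: real
      assume \<delta>: "\<delta> \<in> {0<..1/10^7}"
        and meas: "\<forall>t. u1 t \<in> borel_measurable lborel \<and> v2 t \<in> borel_measurable lborel"
        and A: "A \<ge> 0" and B: "B \<ge> 0"
        and hA: "\<forall>t. sob_sq k (u1 t) \<le> ennreal (A\<^sup>2)" and hB: "\<forall>t. sob_sq s (v2 t) \<le> ennreal (B\<^sup>2)"
      define f where "f = u1 t"
      define g where "g = v2 t"
      have fm[measurable]: "f \<in> borel_measurable borel" using meas unfolding f_def by simp
      have gm[measurable]: "g \<in> borel_measurable borel" using meas unfolding g_def by simp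
      have \<delta>': "0 < \<delta>" "\<delta> \<le> 1/10^7" using \<delta> by auto
      define J where "J \<xi> = (\<integral>\<^sup>+\<xi>1. ennreal ((1 + \<xi>1\<^sup>2) powr k * (cmod (f \<xi>1))\<^sup>2)
                   * ennreal ((1 + (\<xi> - \<xi>1)\<^sup>2) powr s * (cmod (g (\<xi> - \<xi>1)))\<^sup>2) \<partial>lborel)" for \<xi>
      have Jm: "J \<in> borel_measurable lborel" unfolding J_def by measurable
      have pw: "ennreal ((1 + \<xi>\<^sup>2) powr (k + \<epsilon>) * (cmod (Bu_hat \<delta> f g \<xi>))\<^sup>2)
          \<le> ennreal (K * \<delta> powr (2 * \<theta>)) * J \<xi>" for \<xi>
      proof -
        have "2 * \<theta> = -2 * (max k \<beta> + \<epsilon> - s - 3)" unfolding \<theta>_def e_def by simp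
        then show ?thesis
          using pointwise_a[OF fm gm k0 \<beta>(1) \<delta>' _, of \<epsilon> s \<xi>] e0
          unfolding J_def K_def e_def by simp
      qed
      have Jb: "(\<integral>\<^sup>+\<xi>. J \<xi> \<partial>lborel) \<le> ennreal (A\<^sup>2) * ennreal (B\<^sup>2)"
      proof -
        have "(\<integral>\<^sup>+\<xi>. J \<xi> \<partial>lborel) = sob_sq k f * sob_sq s g"
          unfolding J_def sob_sq_def
          by (rule tonelli_conv_minus[of "\<lambda>x. ennreal ((1 + x\<^sup>2) powr k * (cmod (f x))\<^sup>2)"
                "\<lambda>x. ennreal ((1 + x\<^sup>2) powr s * (cmod (g x))\<^sup>2)", simplified]) measurable
        also have "\<dots> \<le> ennreal (A\<^sup>2) * ennreal (B\<^sup>2)"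
          using hA hB unfolding f_def g_def by (intro mult_mono) auto
        finally show ?thesis .
      qed
      show "sob_sq (k + \<epsilon>) (Bu_hat \<delta> (u1 t) (v2 t)) \<le> ennreal ((sqrt K * \<delta> powr \<theta> * A * B)\<^sup>2)"
        unfolding sob_sq_def f_def[symmetric] g_def[symmetric]
        by (rule final_step[OF pw Jm Jb K0 \<delta>'(1) A B])
    qed
  }
  {
    fix \<epsilon> :: real
    assume he: "\<epsilon> < min (2 - s + k) (4 * k - s)"
    define \<beta> where "\<beta> = (1/2 + min 1 (2 - s + 2 * k - \<epsilon>)) / 2"
    have gap: "2 - s + 2 * k - \<epsilon> > 1/2" using he k0 by (auto simp: min_def split: if_splits)
    have \<beta>: "\<beta> > 1/2" "\<beta> < 2 - s + 2 * k - \<epsilon>" using gap unfolding \<beta>_def by (auto simp: min_def)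
    define e where "e = s + \<epsilon> - 2 - k + max (\<beta> - k) 0"
    have e0: "e < 0" unfolding e_def using he \<beta> by (auto simp: max_def min_def split: if_splits)
    define \<theta> where "\<theta> = - e"
    have \<theta>pos: "\<theta> > 0" unfolding \<theta>_def using e0 by simp
    define K where "K = 8 * enn2real (\<integral>\<^sup>+x. ennreal ((1 + x\<^sup>2) powr (-\<beta>)) \<partial>lborel) * 4 powr k
                 * 10201 powr (max (\<beta> - k) 0) / pi\<^sup>2 * 100 powr (-2 * e)"
    have K0: "K \<ge> 0" unfolding K_def by simp
    show "\<exists>\<theta> > (0::real). \<exists>C::real. \<forall>\<delta>v \<in> {0<..1/10^7}.
        \<forall>(u1 :: real \<Rightarrow> real \<Rightarrow> complex) (u2 :: real \<Rightarrow> real \<Rightarrow> complex) (A::real) (B::real).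
          (\<forall>t. u1 t \<in> borel_measurable lborel \<and> u2 t \<in> borel_measurable lborel) \<longrightarrow>
          A \<ge> 0 \<longrightarrow> B \<ge> 0 \<longrightarrow>
          (\<forall>t. sob_sq k (u1 t) \<le> ennreal (A\<^sup>2)) \<longrightarrow>
          (\<forall>t. sob_sq k (u2 t) \<le> ennreal (B\<^sup>2)) \<longrightarrow>
          (\<forall>t. sob_sq (s + \<epsilon>) (Bv_hat \<delta>v (u1 t) (u2 t))
                 \<le> ennreal ((C * \<delta>v powr \<theta> * A * B)\<^sup>2))"
    proof (rule exI[of _ \<theta>], rule conjI[OF \<theta>pos], rule exI[of _ "sqrt K"], intro ballI allI impI)
      fix \<delta> :: real and u1 u2 :: "real \<Rightarrow> real \<Rightarrow> complex" and A B :: real and t :: real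
      assume \<delta>: "\<delta> \<in> {0<..1/10^7}"
        and meas: "\<forall>t. u1 t \<in> borel_measurable lborel \<and> u2 t \<in> borel_measurable lborel"
        and A: "A \<ge> 0" and B: "B \<ge> 0"
        and hA: "\<forall>t. sob_sq k (u1 t) \<le> ennreal (A\<^sup>2)" and hB: "\<forall>t. sob_sq k (u2 t) \<le> ennreal (B\<^sup>2)"
      define f where "f = u1 t"
      define g where "g = u2 t"
      have fm[measurable]: "f \<in> borel_measurable borel" using meas unfolding f_def by simp
      have gm[measurable]: "g \<in> borel_measurable borel" using meas unfolding g_def by simp
      have \<delta>': "0 < \<delta>" "\<delta> \<le> 1/10^7" using \<delta> by auto
      define J where "J \<xi> = (\<integral>\<^sup>+\<xi>1. ennreal ((1 + \<xi>1\<^sup>2) powr k * (cmod (f \<xi>1))\<^sup>2)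
                   * ennreal ((1 + (\<xi>1 - \<xi>)\<^sup>2) powr k * (cmod (g (\<xi>1 - \<xi>)))\<^sup>2) \<partial>lborel)" for \<xi>
      have Jm: "J \<in> borel_measurable lborel" unfolding J_def by measurable
      have pw: "ennreal ((1 + \<xi>\<^sup>2) powr (s + \<epsilon>) * (cmod (Bv_hat \<delta> f g \<xi>))\<^sup>2)
          \<le> ennreal (K * \<delta> powr (2 * \<theta>)) * J \<xi>" for \<xi>
      proof -
        have "2 * \<theta> = -2 * (s + \<epsilon> - 2 - k + max (\<beta> - k) 0)" unfolding \<theta>_def e_def by simp
        then show ?thesis
          using pointwise_b[OF fm gm k0 \<beta>(1) \<delta>' _, of s \<epsilon> \<xi>] e0
          unfolding J_def K_def e_def by simp
      qed
      have Jb: "(\<integral>\<^sup>+\<xi>. J \<xi> \<partial>lborel) \<le> ennreal (A\<^sup>2) * ennreal (B\<^sup>2)"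
      proof -
        have "(\<integral>\<^sup>+\<xi>. J \<xi> \<partial>lborel) = sob_sq k f * sob_sq k g"
          unfolding J_def sob_sq_def
          by (rule tonelli_conv_minus2[of "\<lambda>x. ennreal ((1 + x\<^sup>2) powr k * (cmod (f x))\<^sup>2)"
                "\<lambda>x. ennreal ((1 + x\<^sup>2) powr k * (cmod (g x))\<^sup>2)", simplified]) measurable
        also have "\<dots> \<le> ennreal (A\<^sup>2) * ennreal (B\<^sup>2)"
          using hA hB unfolding f_def g_def by (intro mult_mono) auto
        finally show ?thesis .
      qed
      show "sob_sq (s + \<epsilon>) (Bv_hat \<delta> (u1 t) (u2 t)) \<le> ennreal ((sqrt K * \<delta> powr \<theta> * A * B)\<^sup>2)"
        unfolding sob_sq_def f_def[symmetric] g_def[symmetric]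
        by (rule final_step[OF pw Jm Jb K0 \<delta>'(1) A B])
    qed
  }
qed

end
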